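(* Let $3\le k\le n-1$ and let $T$ be a tree attaining the maximum value of $M_2$ over $\mathcal{CT}_{n,k}$. Then $T$ contains no internal path of length greater than $1$.
   Context: A chemical tree is a tree with maximum degree at most $4$. A branching vertex is a vertex of degree greater than $2$. An internal path is a path $u_0\cdots u_r$ ($r\ge1$) whose end vertices $u_0,u_r$ are branching and whose internal vertices all have degree $2$; its length is $r$. A segment of a tree is a path of positive length neither of whose end vertices has degree $2$ and all of whose internal vertices have degree $2$. $\mathcal{CT}_{n,k}$ is the class of all $n$-vertex chemical trees with exactly $k$ segments. $M_2(G)=\sum_{uv\in E(G)}d_ud_v$, where $d_v$ is the degree of $v$. *)

theory Defs
  imports Main
begin

text \<open>Finite simple graphs given by a vertex set V and a set E of 2-element edges.\<close>

definition deg :: "'a set set \<Rightarrow> 'a \<Rightarrow> nat" where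
  "deg E v = card {e \<in> E. v \<in> e}"

definition is_walk :: "'a set set \<Rightarrow> 'a list \<Rightarrow> bool" where
  "is_walk E p \<longleftrightarrow> p \<noteq> [] \<and> (\<forall>i. Suc i < length p \<longrightarrow> {p ! i, p ! Suc i} \<in> E)"

definition is_path :: "'a set set \<Rightarrow> 'a list \<Rightarrow> bool" where
  "is_path E p \<longleftrightarrow> is_walk E p \<and> distinct p \<and> 2 \<le> length p"

definition path_length :: "'a list \<Rightarrow> nat" where
  "path_length p = length p - 1"

definition path_edges :: "'a list \<Rightarrow> 'a set set" where
  "path_edges p = {{p ! i, p ! Suc i} | i. Suc i < length p}"

definition internal_deg2 :: "'a set set \<Rightarrow> 'a list \<Rightarrow> bool" where
  "internal_deg2 E p \<longleftrightarrow> (\<forall>i. 0 < i \<and> Suc i < length p \<longrightarrow> deg E (p ! i) = 2)"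

definition is_tree :: "'a set \<Rightarrow> 'a set set \<Rightarrow> bool" where
  "is_tree V E \<longleftrightarrow> finite V \<and> V \<noteq> {} \<and>
     (\<forall>e \<in> E. e \<subseteq> V \<and> card e = 2) \<and>
     (\<forall>u \<in> V. \<forall>v \<in> V. \<exists>p. is_walk E p \<and> hd p = u \<and> last p = v) \<and>
     card E = card V - 1"

definition chemical_tree :: "'a set \<Rightarrow> 'a set set \<Rightarrow> bool" where
  "chemical_tree V E \<longleftrightarrow> is_tree V E \<and> (\<forall>v \<in> V. deg E v \<le> 4)"

definition branching :: "'a set set \<Rightarrow> 'a \<Rightarrow> bool" where
  "branching E v \<longleftrightarrow> deg E v > 2"

definition internal_path :: "'a set set \<Rightarrow> 'a list \<Rightarrow> bool" where
  "internal_path E p \<longleftrightarrow> is_path E p \<and> branching E (hd p) \<and> branching E (last p)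
      \<and> internal_deg2 E p"

definition is_segment :: "'a set set \<Rightarrow> 'a list \<Rightarrow> bool" where
  "is_segment E p \<longleftrightarrow> is_path E p \<and> deg E (hd p) \<noteq> 2 \<and> deg E (last p) \<noteq> 2
      \<and> internal_deg2 E p"

text \<open>Segments are counted as subgraphs (a path and its reversal are the same segment),
  i.e. via their edge sets.\<close>
definition num_segments :: "'a set set \<Rightarrow> nat" where
  "num_segments E = card {path_edges p | p. is_segment E p}"

definition CT :: "nat \<Rightarrow> nat \<Rightarrow> ('a set \<times> 'a set set) set" where
  "CT n k = {(V, E). chemical_tree V E \<and> card V = n \<and> num_segments E = k}"

definition M2 :: "'a set set \<Rightarrow> nat" where
  "M2 E = (\<Sum>e\<in>E. \<Prod>v\<in>e. deg E v)"

end

theory Submission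
  imports Defs
begin


lemma walk_Nil[simp]: "\<not> is_walk E []" by (simp add: is_walk_def)
lemma walk_single[simp]: "is_walk E [u]" by (simp add: is_walk_def)
lemma walk_Cons2: "is_walk E (u # v # q) \<longleftrightarrow> {u,v} \<in> E \<and> is_walk E (v # q)"
proof
  assume h: "is_walk E (u # v # q)"
  then have "{u,v} \<in> E" unfolding is_walk_def by force
  moreover have "is_walk E (v # q)" unfolding is_walk_def
  proof (intro conjI allI impI)
    fix i assume "Suc i < length (v # q)"
    then show "{(v # q) ! i, (v # q) ! Suc i} \<in> E" using h[unfolded is_walk_def] 
      by (metis (no_types, lifting) Suc_less_eq length_Cons nth_Cons_Suc)
  qed simp
  ultimately show "{u,v} \<in> E \<and> is_walk E (v # q)" by simp
next
  assume h: "{u,v} \<in> E \<and> is_walk E (v # q)"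
  show "is_walk E (u # v # q)" unfolding is_walk_def
  proof (intro conjI allI impI)
    fix i assume i: "Suc i < length (u # v # q)"
    show "{(u # v # q) ! i, (u # v # q) ! Suc i} \<in> E"
    proof (cases i)
      case 0 then show ?thesis using h by simp
    next
      case (Suc j) then show ?thesis using h i unfolding is_walk_def by auto
    qed
  qed simp
qed

inductive rch :: "'a set set \<Rightarrow> 'a \<Rightarrow> 'a \<Rightarrow> bool" for E where
  rch_refl: "rch E u u"
| rch_step: "{u,v} \<in> E \<Longrightarrow> rch E v w \<Longrightarrow> rch E u w"

lemma rch_trans: "rch E u v \<Longrightarrow> rch E v w \<Longrightarrow> rch E u w"
  by (induction rule: rch.induct) (auto intro: rch_step)

lemma rch_edge: "{u,v} \<in> E \<Longrightarrow> rch E u v"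
  by (meson rch.intros)

lemma rch_sym: "rch E u v \<Longrightarrow> rch E v u"
proof (induction rule: rch.induct)
  case (rch_step u v w)
  have "rch E v u" using rch_step(1) by (simp add: insert_commute rch_edge)
  then show ?case using rch_step(3) rch_trans by metis
qed (rule rch_refl)

lemma walk_rch: "is_walk E q \<Longrightarrow> rch E (hd q) (last q)"
proof (induction q)
  case Nil then show ?case by simp
next
  case (Cons a q)
  show ?case
  proof (cases q)
    case Nil then show ?thesis by (simp add: rch_refl)
  next
    case (Cons b q') then show ?thesis using Cons.prems Cons.IH
      by (auto simp: walk_Cons2 intro: rch_step)
  qed
qed

lemma rch_walk: "rch E u v \<Longrightarrow> \<exists>q. is_walk E q \<and> hd q = u \<and> last q = v"
proof (induction rule: rch.induct)
  case (rch_refl u) then show ?case by (intro exI[of _ "[u]"]) simp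
next
  case (rch_step u v w)
  then obtain q where q: "is_walk E q" "hd q = v" "last q = w" by blast
  then obtain q' where "q = v # q'" by (cases q) auto
  then show ?case using q rch_step by (intro exI[of _ "u # q"]) (auto simp: walk_Cons2)
qed

lemma rch_iff_walk: "rch E u v \<longleftrightarrow> (\<exists>q. is_walk E q \<and> hd q = u \<and> last q = v)"
  using rch_walk walk_rch by metis

lemma rch_closed: "rch E u v \<Longrightarrow> u \<in> S \<Longrightarrow> (\<forall>a b. {a,b} \<in> E \<longrightarrow> a \<in> S \<longrightarrow> b \<in> S) \<Longrightarrow> v \<in> S"
  by (induction rule: rch.induct) auto

lemma rch_mono: "rch E u v \<Longrightarrow> (\<forall>a b. {a,b} \<in> E \<longrightarrow> rch E' a b) \<Longrightarrow> rch E' u v"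
  by (induction rule: rch.induct) (auto intro: rch_refl rch_trans)



lemma conn_card:
  assumes fV: "finite V" and fE: "finite E" and z: "z \<in> V"
    and EV: "\<forall>e\<in>E. e \<subseteq> V" and conn: "\<forall>v\<in>V. rch E v z"
  shows "card V \<le> card E + 1"
proof -
  define D where "D v = (LEAST n. \<exists>q. is_walk E q \<and> hd q = v \<and> last q = z \<and> length q = n)" for v
  have ex_nx: "\<exists>b. {v,b} \<in> E \<and> D b < D v" if v: "v \<in> V" "v \<noteq> z" for v
  proof -
    have "\<exists>n q. is_walk E q \<and> hd q = v \<and> last q = z \<and> length q = n"
      using conn v rch_walk by fastforce
    then have "\<exists>q. is_walk E q \<and> hd q = v \<and> last q = z \<and> length q = D v"
      unfolding D_def by (rule LeastI_ex)
    then obtain q where q: "is_walk E q" "hd q = v" "last q = z" "length q = D v" by blast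
    then obtain b q' where qq: "q = v # b # q'" using v
      by (cases q; cases "tl q") auto
    have "{v,b} \<in> E" "is_walk E (b # q')" using q(1) qq walk_Cons2 by metis+
    moreover have "D b \<le> length (b # q')"
      unfolding D_def using calculation q qq by (intro Least_le) (rule exI[of _ "b # q'"], simp)
    ultimately show ?thesis using q qq by (intro exI[of _ b]) auto
  qed
  define nx where "nx v = (SOME b. {v,b} \<in> E \<and> D b < D v)" for v
  have nx: "{v, nx v} \<in> E \<and> D (nx v) < D v" if "v \<in> V" "v \<noteq> z" for v
    unfolding nx_def using someI_ex[OF ex_nx[OF that]] .
  have inj: "inj_on (\<lambda>v. {v, nx v}) (V - {z})"
  proof (rule inj_onI)
    fix v w assume vw: "v \<in> V - {z}" "w \<in> V - {z}" "{v, nx v} = {w, nx w}"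
    show "v = w"
    proof (rule ccontr)
      assume "v \<noteq> w"
      then have "v = nx w" "w = nx v" using vw(3) by (auto simp: doubleton_eq_iff)
      then show False using nx[of v] nx[of w] vw by auto
    qed
  qed
  have "(\<lambda>v. {v, nx v}) ` (V - {z}) \<subseteq> E" using nx by auto
  then have "card (V - {z}) \<le> card E" using card_inj_on_le[OF inj _ fE] by blast
  then show ?thesis using z fV by auto
qed



lemma tree_finE: "is_tree V E \<Longrightarrow> finite E"
  unfolding is_tree_def by (meson finite_Pow_iff finite_subset subsetI PowI)

lemma tree_edge: "is_tree V E \<Longrightarrow> {a,b} \<in> E \<Longrightarrow> a \<noteq> b \<and> a \<in> V \<and> b \<in> V"
proof -
  assume T: "is_tree V E" and ab: "{a,b} \<in> E"
  then have "card {a,b} = 2" "{a,b} \<subseteq> V" unfolding is_tree_def by blast+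
  then show ?thesis by (cases "a = b") auto
qed

lemma tree_rch: "is_tree V E \<Longrightarrow> u \<in> V \<Longrightarrow> v \<in> V \<Longrightarrow> rch E u v"
  unfolding is_tree_def using walk_rch by metis

lemma tree_EV: "is_tree V E \<Longrightarrow> e \<in> E \<Longrightarrow> e \<subseteq> V"
  unfolding is_tree_def by blast

lemma walk_edge: "is_walk E q \<Longrightarrow> Suc i < length q \<Longrightarrow> {q!i, q!Suc i} \<in> E"
  unfolding is_walk_def by blast

lemma walk_in_V: "is_tree V E \<Longrightarrow> is_walk E q \<Longrightarrow> 2 \<le> length q \<Longrightarrow> i < length q \<Longrightarrow> q!i \<in> V"
proof -
  assume a: "is_tree V E" "is_walk E q" "2 \<le> length q" "i < length q"
  show ?thesis
  proof (cases "Suc i < length q")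
    case True then show ?thesis using walk_edge[OF a(2) True] tree_edge[OF a(1)] by blast
  next
    case False then have "i = Suc (i - 1)" "Suc (i-1) < length q" using a by auto
    then show ?thesis using walk_edge[OF a(2), of "i-1"] tree_edge[OF a(1)] by metis
  qed
qed

lemma dnth: "distinct q \<Longrightarrow> i < length q \<Longrightarrow> j < length q \<Longrightarrow> i \<noteq> j \<Longrightarrow> q!i \<noteq> q!j"
  by (simp add: nth_eq_iff_index_eq)

lemma tree_acyclic:
  assumes T: "is_tree V E" and q: "is_walk E q" "distinct q" "3 \<le> length q"
    and cl: "{last q, hd q} \<in> E"
  shows False
proof -
  define e where "e = {q!0, q!1}"
  define E1 where "E1 = E - {e}"
  have fE: "finite E" using tree_finE[OF T] .
  have chain: "rch E1 (q!i) (q!1)" if "1 \<le> i" "i < length q" for i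
    using that
  proof (induction i)
    case 0 then show ?case by simp
  next
    case (Suc i)
    show ?case
    proof (cases "i = 0")
      case True then show ?thesis by (simp add: rch_refl)
    next
      case False
      have ed: "{q!i, q!Suc i} \<in> E" using walk_edge[OF q(1)] Suc by auto
      have "q!Suc i \<noteq> q!0" "q!Suc i \<noteq> q!1" "q!i \<noteq> q!0"
        using dnth[OF q(2), of "Suc i" 0] dnth[OF q(2), of "Suc i" 1] dnth[OF q(2), of i 0] Suc.prems False
        by (simp_all del: length_greater_0_conv)
      then have "{q!i, q!Suc i} \<noteq> e" unfolding e_def by (auto simp: doubleton_eq_iff)
      then have "rch E1 (q!Suc i) (q!i)" using ed unfolding E1_def
        by (simp add: insert_commute rch_edge)
      then show ?thesis using Suc False rch_trans by fastforce
    qed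
  qed
  have qne: "q \<noteq> []" using q(3) by (cases q) auto
  have q0: "hd q = q!0" "last q = q!(length q - 1)" using qne by (simp_all add: hd_conv_nth last_conv_nth)
  have "q!(length q - 1) \<noteq> q!0" "q!(length q - 1) \<noteq> q!1"
    using dnth[OF q(2), of "length q - 1" 0] dnth[OF q(2), of "length q - 1" 1] q(3) by (simp_all del: length_greater_0_conv)
  then have "{q!0, q!(length q - 1)} \<noteq> e" unfolding e_def by (auto simp: doubleton_eq_iff)
  then have "rch E1 (q!0) (q!(length q - 1))" using cl q0 unfolding E1_def
    by (simp add: insert_commute rch_edge)
  then have r01: "rch E1 (q!0) (q!1)" using chain[of "length q - 1"] q(3) rch_trans by fastforce
  have allE: "\<forall>a b. {a,b} \<in> E \<longrightarrow> rch E1 a b"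
  proof (intro allI impI)
    fix a b assume ab: "{a,b} \<in> E"
    show "rch E1 a b"
    proof (cases "{a,b} = e")
      case True then have "(a = q!0 \<and> b = q!1) \<or> (a = q!1 \<and> b = q!0)"
        unfolding e_def by (auto simp: doubleton_eq_iff)
      then show ?thesis using r01 rch_sym by metis
    next
      case False then show ?thesis using ab unfolding E1_def by (simp add: rch_edge)
    qed
  qed
  have z: "q!0 \<in> V" using walk_in_V[OF T q(1), of 0] q(3) by linarith
  have "\<forall>v\<in>V. rch E1 v (q!0)" using allE tree_rch[OF T _ z] rch_mono by metis
  moreover have "finite V" using T unfolding is_tree_def by blast
  moreover have "\<forall>e\<in>E1. e \<subseteq> V" using T unfolding E1_def is_tree_def by blast
  ultimately have "card V \<le> card E1 + 1" using conn_card[of V E1 "q!0"] z fE unfolding E1_def by blast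
  moreover have "e \<in> E" unfolding e_def using walk_edge[OF q(1), of 0] q(3) by auto
  then have "card E1 = card E - 1" unfolding E1_def using fE by simp
  moreover have "card E = card V - 1" "card V \<ge> 1" using T z unfolding is_tree_def
    using \<open>finite V\<close> card_0_eq by fastforce+
  moreover have "card E \<ge> 1" using \<open>e \<in> E\<close> fE card_0_eq by fastforce
  ultimately show False by linarith
qed




lemma card2_obtain: "card e = 2 \<Longrightarrow> a \<in> e \<Longrightarrow> \<exists>y. y \<noteq> a \<and> e = {a,y}"
  by (auto simp: card_2_iff)

lemma seg_hd: "is_segment E s \<Longrightarrow> hd s = s!0"
  unfolding is_segment_def is_path_def by (cases s) auto
lemma seg_last: "is_segment E s \<Longrightarrow> last s = s!(length s - 1)"
  unfolding is_segment_def is_path_def by (cases s rule: rev_cases) auto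

lemma deg2_nbr:
  assumes T: "is_tree V E" and d: "deg E v = 2"
    and ea: "{v,a} \<in> E" and eb: "{v,b} \<in> E" and ab: "a \<noteq> b" and ec: "{v,c} \<in> E"
  shows "c = a \<or> c = b"
proof (rule ccontr)
  assume c: "\<not> (c = a \<or> c = b)"
  have "v \<noteq> a" "v \<noteq> b" "v \<noteq> c" using tree_edge[OF T ea] tree_edge[OF T eb] tree_edge[OF T ec] by simp_all
  then have dist: "{v,a} \<noteq> {v,b}" "{v,a} \<noteq> {v,c}" "{v,b} \<noteq> {v,c}" using ab c
    by (metis doubleton_eq_iff)+
  have "{{v,a},{v,b},{v,c}} \<subseteq> {e\<in>E. v \<in> e}" using ea eb ec by simp
  moreover have "finite {e\<in>E. v \<in> e}" using tree_finE[OF T] by simp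
  ultimately have "card {{v,a},{v,b},{v,c}} \<le> deg E v" unfolding deg_def by (simp add: card_mono)
  moreover have "card {{v,a},{v,b},{v,c}} = 3" using dist by simp
  ultimately show False using d by simp
qed

lemma seg_int: "is_segment E s \<Longrightarrow> 0 < i \<Longrightarrow> Suc i < length s \<Longrightarrow> deg E (s!i) = 2"
  unfolding is_segment_def internal_deg2_def by blast

lemma seg_unique:
  assumes T: "is_tree V E" and s: "is_segment E s" and t: "is_segment E t"
    and h: "hd s = hd t" and one: "s!1 = t!1"
  shows "s = t"
proof -
  have sw: "is_walk E s" "distinct s" "2 \<le> length s" and tw: "is_walk E t" "distinct t" "2 \<le> length t"
    using s t unfolding is_segment_def is_path_def by blast+
  have claim: "Suc i < length s \<longrightarrow> Suc i < length t \<longrightarrow> s!i = t!i \<and> s!Suc i = t!Suc i" for i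
  proof (induction i)
    case 0 then show ?case using h one seg_hd[OF s] seg_hd[OF t] by simp
  next
    case (Suc i)
    show ?case
    proof (intro impI)
      assume l: "Suc (Suc i) < length s" "Suc (Suc i) < length t"
      then have ih: "s!i = t!i" "s!Suc i = t!Suc i" using Suc by auto
      have d: "deg E (s!Suc i) = 2" using seg_int[OF s, of "Suc i"] l by simp
      have e1: "{s!Suc i, s!i} \<in> E" using walk_edge[OF sw(1), of i] l by (simp add: insert_commute)
      have e2: "{s!Suc i, s!Suc (Suc i)} \<in> E" using walk_edge[OF sw(1), of "Suc i"] l by simp
      have e3: "{s!Suc i, t!Suc (Suc i)} \<in> E" using walk_edge[OF tw(1), of "Suc i"] l ih by simp
      have n1: "s!i \<noteq> s!Suc (Suc i)" using dnth[OF sw(2), of i "Suc (Suc i)"] l by simp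
      have n2: "t!Suc (Suc i) \<noteq> t!i" using dnth[OF tw(2), of "Suc (Suc i)" i] l by simp
      have "t!Suc (Suc i) = s!i \<or> t!Suc (Suc i) = s!Suc (Suc i)"
        using deg2_nbr[OF T d e1 e2 n1 e3] .
      then show "s!Suc i = t!Suc i \<and> s!Suc (Suc i) = t!Suc (Suc i)" using n2 ih by auto
    qed
  qed
  have len: "length s = length t"
  proof (rule ccontr)
    assume ne: "length s \<noteq> length t"
    have gen: "False" if s': "is_segment E s'" and t': "is_segment E t'" and lt: "length s' < length t'"
      and cl: "\<And>i. Suc i < length s' \<Longrightarrow> Suc i < length t' \<Longrightarrow> s'!Suc i = t'!Suc i"
      and l2: "2 \<le> length s'" for s' t'
    proof -
      define m where "m = length s' - 1"
      have mm: "Suc (m-1) = m" "m < length s'" "m < length t'" using l2 lt unfolding m_def by linarith+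
      have "s'!m = t'!m" using cl[of "m - 1"] mm by simp
      moreover have "deg E (t'!m) = 2" using seg_int[OF t', of m] lt l2 unfolding m_def by simp
      moreover have "deg E (s'!m) \<noteq> 2" using s' seg_last[OF s'] unfolding is_segment_def m_def by simp
      ultimately show False by simp
    qed
    show False
    proof (cases "length s < length t")
      case True then show False using gen[OF s t] claim sw(3) by blast
    next
      case False then have "length t < length s" using ne by simp
      then show False using gen[OF t s] claim tw(3) by auto
    qed
  qed
  show ?thesis
  proof (rule nth_equalityI[OF len])
    fix i assume i: "i < length s"
    show "s!i = t!i"
    proof (cases i)
      case 0 then show ?thesis using claim[of 0] sw(3) len by simp
    next
      case (Suc j) then show ?thesis using claim[of j] i len by simp
    qed
  qed
qed



lemma seg_rev:
  assumes s: "is_segment E s" shows "is_segment E (rev s)"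
proof -
  have sw: "is_walk E s" "distinct s" "2 \<le> length s" using s unfolding is_segment_def is_path_def by blast+
  let ?n = "length s"
  have w: "is_walk E (rev s)" unfolding is_walk_def
  proof (intro conjI allI impI)
    show "rev s \<noteq> []" using sw(3) by (cases s) auto
    fix i assume i: "Suc i < length (rev s)"
    define j where "j = ?n - Suc (Suc i)"
    have j: "Suc j < ?n" "?n - Suc i = Suc j" using i unfolding j_def by auto
    have "rev s ! i = s!(Suc j)" "rev s ! Suc i = s ! j" using i j unfolding j_def by (auto simp: rev_nth)
    then show "{rev s ! i, rev s ! Suc i} \<in> E" using walk_edge[OF sw(1) j(1)] by (simp add: insert_commute)
  qed
  have int: "internal_deg2 E (rev s)" unfolding internal_deg2_def
  proof (intro allI impI)
    fix i assume i: "0 < i \<and> Suc i < length (rev s)"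
    have "rev s ! i = s!(?n - Suc i)" using i by (simp add: rev_nth)
    moreover have "0 < ?n - Suc i" "Suc (?n - Suc i) < ?n" using i by auto
    ultimately show "deg E (rev s ! i) = 2" using seg_int[OF s] by simp
  qed
  show ?thesis using s w int sw unfolding is_segment_def is_path_def by (simp add: hd_rev last_rev)
qed

lemma pe_rev: "path_edges (rev s) = path_edges s"
proof -
  let ?n = "length s"
  have a: "path_edges (rev s) \<subseteq> path_edges s" for s :: "'a list"
  proof
    fix e assume "e \<in> path_edges (rev s)"
    then obtain i where i: "Suc i < length s" "e = {rev s ! i, rev s ! Suc i}" unfolding path_edges_def by auto
    define j where "j = length s - Suc (Suc i)"
    have j: "Suc j < length s" "length s - Suc i = Suc j" using i unfolding j_def by auto
    have "rev s ! i = s!(Suc j)" "rev s ! Suc i = s ! j" using i j unfolding j_def by (auto simp: rev_nth)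
    then have "e = {s!j, s!Suc j}" using i by (simp add: insert_commute)
    then show "e \<in> path_edges s" using j unfolding path_edges_def by blast
  qed
  show ?thesis using a[of s] a[of "rev s"] by simp
qed

lemma seg_pe_eq:
  assumes T: "is_tree V E" and s: "is_segment E s" and t: "is_segment E t"
    and pe: "path_edges s = path_edges t"
  shows "t = s \<or> t = rev s"
proof -
  have sw: "is_walk E s" "distinct s" "2 \<le> length s" and tw: "is_walk E t" "distinct t" "2 \<le> length t"
    using s t unfolding is_segment_def is_path_def by blast+
  have "{t!0, t!1} \<in> path_edges t" using tw(3) unfolding path_edges_def by force
  then have "{t!0, t!1} \<in> path_edges s" using pe by simp
  then obtain i where i: "Suc i < length s" "{t!0, t!1} = {s!i, s!Suc i}" unfolding path_edges_def by blast
  have dt: "deg E (t!0) \<noteq> 2" using t seg_hd[OF t] unfolding is_segment_def by simp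
  have "(t!0 = s!i \<and> t!1 = s!Suc i) \<or> (t!0 = s!Suc i \<and> t!1 = s!i)" using i(2) by (auto simp: doubleton_eq_iff)
  then show ?thesis
  proof
    assume h: "t!0 = s!i \<and> t!1 = s!Suc i"
    have "i = 0"
    proof (rule ccontr)
      assume "i \<noteq> 0" then show False using seg_int[OF s, of i] i dt h by simp
    qed
    then have "t = s" using seg_unique[OF T t s] h seg_hd[OF s] seg_hd[OF t] by simp
    then show ?thesis by simp
  next
    assume h: "t!0 = s!Suc i \<and> t!1 = s!i"
    have "length s = Suc (Suc i)"
    proof (rule ccontr)
      assume "length s \<noteq> Suc (Suc i)" then show False using seg_int[OF s, of "Suc i"] i dt h by simp
    qed
    moreover have rs: "is_segment E (rev s)" by (rule seg_rev[OF s])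
    moreover have "hd (rev s) = s!Suc i" "rev s ! 1 = s!i" using calculation(1) seg_last[OF s]
      by (simp_all add: hd_rev rev_nth)
    ultimately have "t = rev s" using seg_unique[OF T t rs] h seg_hd[OF t] by simp
    then show ?thesis by simp
  qed
qed



lemma walk_snoc:
  assumes q: "is_walk E q" and e: "{last q, y} \<in> E" shows "is_walk E (q @ [y])"
  unfolding is_walk_def
proof (intro conjI allI impI)
  show "q @ [y] \<noteq> []" by simp
  fix i assume i: "Suc i < length (q @ [y])"
  have qne: "q \<noteq> []" using q by (cases q) auto
  show "{(q @ [y]) ! i, (q @ [y]) ! Suc i} \<in> E"
  proof (cases "Suc i < length q")
    case True then show ?thesis using walk_edge[OF q True] by (simp add: nth_append)
  next
    case False then have "i = length q - 1" using i by simp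
    then show ?thesis using e qne by (simp add: nth_append last_conv_nth)
  qed
qed

lemma seg_exists:
  assumes T: "is_tree V E" and v: "v \<in> V" and dv: "deg E v \<noteq> 2" and vw: "{v,w} \<in> E"
  shows "\<exists>s. is_segment E s \<and> hd s = v \<and> s!1 = w"
proof -
  have fV: "finite V" using T unfolding is_tree_def by blast
  have main: "is_walk E q \<Longrightarrow> distinct q \<Longrightarrow> 2 \<le> length q \<Longrightarrow> hd q = v \<Longrightarrow> q!1 = w \<Longrightarrow> internal_deg2 E q
     \<Longrightarrow> \<exists>s. is_segment E s \<and> hd s = v \<and> s!1 = w" for q
  proof (induction q rule: measure_induct_rule[of "\<lambda>q. card V - length q"])
    case (less q)
    have qne: "q \<noteq> []" using less.prems(3) by (cases q) auto
    define m where "m = length q - 1"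
    have m1: "1 \<le> m" "Suc m = length q" "m - 1 < length q" "Suc (m - 1) = m" "m < length q" using less.prems(3) unfolding m_def by linarith+
    have lastq: "last q = q!m" using qne unfolding m_def by (simp add: last_conv_nth)
    show ?case
    proof (cases "deg E (last q) = 2")
      case False
      have "is_segment E q" unfolding is_segment_def is_path_def
        using less.prems(1,2,3,6) False dv by (simp add: less.prems(4))
      then show ?thesis using less.prems(4,5) by blast
    next
      case True
      define N where "N = {e\<in>E. q!m \<in> e}"
      have fN: "finite N" unfolding N_def using tree_finE[OF T] by simp
      have cN: "card N = 2" using True lastq unfolding N_def deg_def by simp
      have e0: "{q!(m-1), q!m} \<in> N" using walk_edge[OF less.prems(1), of "m-1"] m1 unfolding N_def by simp
      have "\<exists>e1\<in>N. e1 \<noteq> {q!(m-1), q!m}"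
      proof (rule ccontr)
        assume "\<not> ?thesis" then have "N \<subseteq> {{q!(m-1), q!m}}" by blast
        then have "card N \<le> card {{q!(m-1), q!m}}" by (intro card_mono) simp_all
        then have "card N \<le> 1" by simp
        then show False using cN by simp
      qed
      then obtain e1 where e1: "e1 \<in> E" "q!m \<in> e1" "e1 \<noteq> {q!(m-1), q!m}" unfolding N_def by blast
      have c2: "card e1 = 2" using T e1(1) unfolding is_tree_def by blast
      have "\<exists>y. y \<noteq> q!m \<and> e1 = {q!m, y}" by (rule card2_obtain[OF c2 e1(2)])
      then obtain y where y: "y \<noteq> q!m" "e1 = {q!m, y}" by blast
      have ym1: "y \<noteq> q!(m-1)" using y(2) e1(3) insert_commute by metis
      have ynot: "y \<notin> set q"
      proof
        assume "y \<in> set q"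
        then obtain j where j: "j < length q" "q!j = y" by (auto simp: in_set_conv_nth)
        have jm: "j \<noteq> m" "j \<noteq> m - 1" using j y ym1 by auto
        show False
        proof (cases "j = 0")
          case True
          have "{last q, hd q} \<in> E" using e1 y j True lastq qne by (simp add: hd_conv_nth)
          moreover have "3 \<le> length q" using jm True m1 by linarith
          ultimately show False using tree_acyclic[OF T less.prems(1,2)] by blast
        next
          case False
          have jj: "j - 1 < length q" "Suc j < length q" "Suc (j-1) = j" "0 < j" "j - 1 \<noteq> m" "Suc j \<noteq> m" "j-1 \<noteq> Suc j"
            using False jm j m1 by linarith+
          have dj: "deg E (q!j) = 2" using less.prems(6) jj unfolding internal_deg2_def by blast
          have ea: "{q!j, q!(j-1)} \<in> E" using walk_edge[OF less.prems(1), of "j-1"] jj by (simp add: insert_commute)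
          have eb: "{q!j, q!Suc j} \<in> E" using walk_edge[OF less.prems(1), of j] jj by simp
          have ec: "{q!j, q!m} \<in> E" using e1 y j by (simp add: insert_commute)
          have nab: "q!(j-1) \<noteq> q!Suc j" using dnth[OF less.prems(2)] jj by blast
          have "q!m = q!(j-1) \<or> q!m = q!Suc j" using deg2_nbr[OF T dj ea eb nab ec] .
          moreover have "q!m \<noteq> q!(j-1)" "q!m \<noteq> q!Suc j" using dnth[OF less.prems(2), of m "j-1"] dnth[OF less.prems(2), of m "Suc j"] jj m1 by simp_all
          ultimately show False by blast
        qed
      qed
      define q' where "q' = q @ [y]"
      have w': "is_walk E q'" unfolding q'_def using walk_snoc[OF less.prems(1)] e1 y lastq by simp
      have d': "distinct q'" unfolding q'_def using less.prems(2) ynot by simp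
      have l': "2 \<le> length q'" unfolding q'_def using less.prems(3) by simp
      have h': "hd q' = v" unfolding q'_def using less.prems(4) qne by simp
      have o': "q'!1 = w" unfolding q'_def using less.prems(5) m1 by (simp add: nth_append)
      have i': "internal_deg2 E q'" unfolding internal_deg2_def
      proof (intro allI impI)
        fix i assume i: "0 < i \<and> Suc i < length q'"
        show "deg E (q'!i) = 2"
        proof (cases "Suc i < length q")
          case True then show ?thesis using less.prems(6) i unfolding internal_deg2_def q'_def by (simp add: nth_append)
        next
          case False then have "i = m" using i m1 unfolding q'_def by simp
          then show ?thesis using True lastq m1 unfolding q'_def by (simp add: nth_append)
        qed
      qed
      have "set q' \<subseteq> V"
      proof
        fix x assume "x \<in> set q'"
        then obtain i where "i < length q'" "q'!i = x" by (auto simp: in_set_conv_nth)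
        then show "x \<in> V" using walk_in_V[OF T w' l'] by blast
      qed
      then have "card (set q') \<le> card V" using card_mono[OF fV] by blast
      then have "length q' \<le> card V" using distinct_card[OF d'] by simp
      then have "card V - length q' < card V - length q" unfolding q'_def by simp
      then show ?thesis using less.IH[OF _ w' d' l' h' o' i'] by simp
    qed
  qed
  have "is_walk E [v,w]" using vw by (simp add: walk_Cons2)
  moreover have "distinct [v,w]" using tree_edge[OF T vw] by simp
  moreover have "internal_deg2 E [v,w]" unfolding internal_deg2_def by simp
  ultimately show ?thesis using main[of "[v,w]"] by simp
qed



lemma ne2: "2 \<le> length s \<Longrightarrow> s \<noteq> []" by (cases s) auto

lemma seg_formula:
  assumes T: "is_tree V E"
  shows "2 * num_segments E = (\<Sum>v\<in>{v\<in>V. deg E v \<noteq> 2}. deg E v)"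
proof -
  define Segs where "Segs = {s. is_segment E s}"
  define Dts where "Dts = Sigma {v\<in>V. deg E v \<noteq> 2} (\<lambda>v. {e\<in>E. v \<in> e})"
  define \<phi> where "\<phi> s = (hd s, {s!0, s!1})" for s :: "'a list"
  have fV: "finite V" using T unfolding is_tree_def by blast
  have fE: "finite E" using tree_finE[OF T] .
  have inj: "inj_on \<phi> Segs"
  proof (rule inj_onI)
    fix s t assume s: "s \<in> Segs" and t: "t \<in> Segs" and st: "\<phi> s = \<phi> t"
    have ss: "is_segment E s" and tt: "is_segment E t" using s t unfolding Segs_def by simp_all
    have h: "hd s = hd t" and pe: "{s!0, s!1} = {t!0, t!1}" using st unfolding \<phi>_def by simp_all
    have s0: "s!0 = t!0" using h seg_hd[OF ss] seg_hd[OF tt] by simp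
    have "distinct s" "2 \<le> length s" using ss unfolding is_segment_def is_path_def by simp_all
    then have "s!0 \<noteq> s!1" using dnth[of s 0 1] by (simp del: length_greater_0_conv)
    then have "s!1 = t!1" using pe s0 by (metis doubleton_eq_iff)
    then show "s = t" using seg_unique[OF T ss tt h] by simp
  qed
  have img: "\<phi> ` Segs = Dts"
  proof
    show "\<phi> ` Segs \<subseteq> Dts"
    proof
      fix x assume "x \<in> \<phi> ` Segs"
      then obtain s where s: "is_segment E s" "x = \<phi> s" unfolding Segs_def by blast
      have sw: "is_walk E s" "2 \<le> length s" using s(1) unfolding is_segment_def is_path_def by simp_all
      have "s!0 \<in> V" using walk_in_V[OF T sw(1) sw(2), of 0] sw(2) by (simp del: length_greater_0_conv)
      moreover have "deg E (s!0) \<noteq> 2" using s(1) seg_hd[OF s(1)] unfolding is_segment_def by simp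
      moreover have "{s!0, s!1} \<in> E" using walk_edge[OF sw(1), of 0] sw(2) by simp
      ultimately show "x \<in> Dts" unfolding Dts_def s(2) \<phi>_def using seg_hd[OF s(1)] by simp
    qed
  next
    show "Dts \<subseteq> \<phi> ` Segs"
    proof
      fix x assume "x \<in> Dts"
      then obtain v e where x: "x = (v, e)" "v \<in> V" "deg E v \<noteq> 2" "e \<in> E" "v \<in> e" unfolding Dts_def by blast
      have c2: "card e = 2" using T x(4) unfolding is_tree_def by blast
      have "\<exists>w. w \<noteq> v \<and> e = {v, w}" by (rule card2_obtain[OF c2 x(5)])
      then obtain w where w: "e = {v, w}" by blast
      have "\<exists>s. is_segment E s \<and> hd s = v \<and> s!1 = w" by (rule seg_exists[OF T x(2) x(3)]) (use x(4) w in simp)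
      then obtain s where s: "is_segment E s" "hd s = v" "s!1 = w" by blast
      have "\<phi> s = x" unfolding \<phi>_def using s seg_hd[OF s(1)] x(1) w by simp
      then show "x \<in> \<phi> ` Segs" using s(1) unfolding Segs_def by blast
    qed
  qed
  have bij: "bij_betw \<phi> Segs Dts" using inj img unfolding bij_betw_def by simp
  have fD: "finite Dts" unfolding Dts_def using fV fE by simp
  have fS: "finite Segs" using bij_betw_finite[OF bij] fD by simp
  have cD: "card Dts = (\<Sum>v\<in>{v\<in>V. deg E v \<noteq> 2}. deg E v)"
    unfolding Dts_def deg_def using fV fE by simp
  have cS: "card Segs = card Dts" using bij_betw_same_card[OF bij] .
  define Fam where "Fam = path_edges ` Segs"
  have ns: "num_segments E = card Fam" unfolding num_segments_def Fam_def Segs_def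
    by (simp add: setcompr_eq_image)
  define A where "A P = {s\<in>Segs. path_edges s = P}" for P
  have U: "Segs = \<Union> (A ` Fam)" unfolding A_def Fam_def by blast
  have fF: "finite Fam" unfolding Fam_def using fS by simp
  have cA: "card (A P) = 2" if P: "P \<in> Fam" for P
  proof -
    obtain s where s: "is_segment E s" "P = path_edges s" using P unfolding Fam_def Segs_def by blast
    have "A P = {s, rev s}"
    proof
      show "A P \<subseteq> {s, rev s}"
      proof
        fix t assume "t \<in> A P"
        then have t: "is_segment E t" "path_edges t = path_edges s" unfolding A_def Segs_def s(2) by simp_all
        show "t \<in> {s, rev s}" using seg_pe_eq[OF T s(1) t(1)] t(2) by simp
      qed
    next
      show "{s, rev s} \<subseteq> A P" unfolding A_def Segs_def using s seg_rev[OF s(1)] pe_rev[of s] by simp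
    qed
    moreover have "s \<noteq> rev s"
    proof
      assume e: "s = rev s"
      have "distinct s" "2 \<le> length s" using s(1) unfolding is_segment_def is_path_def by simp_all
      then have "s!0 \<noteq> s!(length s - 1)" using dnth[of s 0 "length s - 1"] by (simp del: length_greater_0_conv)
      moreover have "rev s ! 0 = s!(length s - 1)" using \<open>2 \<le> length s\<close> by (simp add: rev_nth del: length_greater_0_conv)
      ultimately show False using e by simp
    qed
    ultimately show ?thesis by simp
  qed
  have "card Segs = (\<Sum>P\<in>Fam. card (A P))"
    unfolding U
  proof (rule card_UN_disjoint[OF fF])
    show "\<forall>P\<in>Fam. finite (A P)" unfolding A_def using fS by simp
    show "\<forall>P\<in>Fam. \<forall>Q\<in>Fam. P \<noteq> Q \<longrightarrow> A P \<inter> A Q = {}" unfolding A_def by blast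
  qed
  also have "\<dots> = 2 * card Fam" using cA by simp
  finally show ?thesis using ns cS cD by simp
qed



lemma rch_image: "rch E u v \<Longrightarrow> rch ((`) f ` E) (f u) (f v)"
proof (induction rule: rch.induct)
  case (rch_refl u) then show ?case by (rule rch.rch_refl)
next
  case (rch_step u v w)
  have "{f u, f v} \<in> (`) f ` E" using rch_step(1) by (metis image_empty image_eqI image_insert)
  then show ?case using rch_step(3) by (rule rch.rch_step)
qed

lemma transfer_iso:
  fixes f :: "'a \<Rightarrow> 'b"
  assumes T: "is_tree V E" and inj: "inj_on f V"
  defines "E' \<equiv> (`) f ` E"
  shows "\<And>v. v \<in> V \<Longrightarrow> deg E' (f v) = deg E v"
    and "is_tree (f ` V) E'"
    and "card (f ` V) = card V"
    and "num_segments E' = num_segments E"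
    and "M2 E' = M2 E"
proof -
  have EV: "\<And>e. e \<in> E \<Longrightarrow> e \<subseteq> V" using tree_EV[OF T] .
  have fV: "finite V" using T unfolding is_tree_def by blast
  have injP: "inj_on ((`) f) E" using inj_on_image_Pow[OF inj] EV by (meson PowI inj_on_subset subsetI)
  show dg: "deg E' (f v) = deg E v" if v: "v \<in> V" for v
  proof -
    have "{e'\<in>E'. f v \<in> e'} = (`) f ` {e\<in>E. v \<in> e}"
      unfolding E'_def using inj_on_image_mem_iff[OF inj v] EV by blast
    moreover have "inj_on ((`) f) {e\<in>E. v \<in> e}" using injP by (rule inj_on_subset) blast
    ultimately show ?thesis unfolding deg_def by (simp add: card_image)
  qed
  show cV: "card (f ` V) = card V" using card_image[OF inj] .
  have cE: "card E' = card E" unfolding E'_def using card_image[OF injP] .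
  have t1: "\<forall>e'\<in>E'. e' \<subseteq> f ` V \<and> card e' = 2"
  proof
    fix e' assume "e' \<in> E'"
    then obtain e where e: "e \<in> E" "e' = f ` e" unfolding E'_def by blast
    have "card e = 2" using T e(1) unfolding is_tree_def by blast
    moreover have "inj_on f e" using inj EV[OF e(1)] by (rule inj_on_subset)
    ultimately show "e' \<subseteq> f ` V \<and> card e' = 2" using e EV[OF e(1)] by (auto simp: card_image)
  qed
  have t2: "\<forall>u'\<in>f ` V. \<forall>v'\<in>f ` V. \<exists>p. is_walk E' p \<and> hd p = u' \<and> last p = v'"
  proof (intro ballI)
    fix u' v' assume "u' \<in> f ` V" "v' \<in> f ` V"
    then obtain u v where uv: "u \<in> V" "v \<in> V" "u' = f u" "v' = f v" by blast
    have "rch E' u' v'" unfolding E'_def uv using rch_image tree_rch[OF T uv(1,2)] by metis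
    then show "\<exists>p. is_walk E' p \<and> hd p = u' \<and> last p = v'" by (rule rch_walk)
  qed
  have t3: "card E' = card (f ` V) - 1" using cE cV T unfolding is_tree_def by simp
  have t4: "finite (f ` V)" "f ` V \<noteq> {}" using fV T unfolding is_tree_def by auto
  show tr: "is_tree (f ` V) E'" unfolding is_tree_def using t1 t2 t3 t4 by blast
  have "{v'\<in>f ` V. deg E' v' \<noteq> 2} = f ` {v\<in>V. deg E v \<noteq> 2}" using dg by auto
  moreover have "inj_on f {v\<in>V. deg E v \<noteq> 2}" using inj by (rule inj_on_subset) blast
  ultimately have "(\<Sum>v\<in>{v'\<in>f ` V. deg E' v' \<noteq> 2}. deg E' v) = (\<Sum>v\<in>{v\<in>V. deg E v \<noteq> 2}. deg E' (f v))"
    by (simp add: sum.reindex)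
  also have "\<dots> = (\<Sum>v\<in>{v\<in>V. deg E v \<noteq> 2}. deg E v)" using dg by simp
  finally show "num_segments E' = num_segments E" using seg_formula[OF tr] seg_formula[OF T] by simp
  have "M2 E' = (\<Sum>e\<in>E. \<Prod>x\<in>f ` e. deg E' x)" unfolding M2_def E'_def
    using sum.reindex[OF injP] by (simp add: E'_def)
  also have "\<dots> = (\<Sum>e\<in>E. \<Prod>v\<in>e. deg E v)"
  proof (rule sum.cong[OF refl])
    fix e assume e: "e \<in> E"
    have ie: "inj_on f e" using inj EV[OF e] by (rule inj_on_subset)
    have "(\<Prod>x\<in>f ` e. deg E' x) = (\<Prod>v\<in>e. deg E' (f v))" using prod.reindex[OF ie] by simp
    also have "\<dots> = (\<Prod>v\<in>e. deg E v)" using dg EV[OF e] by (intro prod.cong) auto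
    finally show "(\<Prod>x\<in>f ` e. deg E' x) = (\<Prod>v\<in>e. deg E v)" .
  qed
  finally show "M2 E' = M2 E" unfolding M2_def .
qed

lemma handshake:
  assumes T: "is_tree V E"
  shows "(\<Sum>v\<in>V. deg E v) = 2 * card E"
proof -
  have fV: "finite V" using T unfolding is_tree_def by blast
  have fE: "finite E" using tree_finE[OF T] .
  have "(\<Sum>v\<in>V. deg E v) = (\<Sum>v\<in>V. \<Sum>e\<in>E. if v \<in> e then 1 else 0)"
  proof (rule sum.cong[OF refl])
    fix v
    show "deg E v = (\<Sum>e\<in>E. if v \<in> e then 1 else 0)"
      unfolding deg_def using sum.inter_filter[OF fE, of "\<lambda>_. 1::nat" "\<lambda>e. v \<in> e"] by simp
  qed
  also have "\<dots> = (\<Sum>e\<in>E. \<Sum>v\<in>V. if v \<in> e then 1 else 0)" by (rule sum.swap)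
  also have "\<dots> = (\<Sum>e\<in>E. card e)"
  proof (rule sum.cong[OF refl])
    fix e assume e: "e \<in> E"
    have "V \<inter> e = e" using tree_EV[OF T e] by blast
    then show "(\<Sum>v\<in>V. if v \<in> e then 1 else 0) = card e" using fV by (simp add: sum.If_cases)
  qed
  also have "\<dots> = 2 * card E" using T unfolding is_tree_def by simp
  finally show ?thesis .
qed



lemma deg_pos:
  assumes T: "is_tree V E" and v: "v \<in> V" and w: "w \<in> V" and vw: "v \<noteq> w"
  shows "1 \<le> deg E v"
proof -
  have "rch E v w" using tree_rch[OF T v w] .
  then obtain y where y: "{v,y} \<in> E" using vw by (cases rule: rch.cases) auto
  have "{v,y} \<in> {e\<in>E. v \<in> e}" using y by simp
  moreover have "finite {e\<in>E. v \<in> e}" using tree_finE[OF T] by simp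
  ultimately show ?thesis unfolding deg_def by (metis One_nat_def Suc_leI card_gt_0_iff empty_iff)
qed

lemma leaf_exists:
  assumes T: "is_tree V E" and c: "2 \<le> card V"
  shows "\<exists>l\<in>V. deg E l = 1"
proof (rule ccontr)
  assume "\<not> ?thesis"
  then have h: "\<forall>v\<in>V. deg E v \<noteq> 1" by blast
  have fV: "finite V" using T unfolding is_tree_def by blast
  have "\<forall>v\<in>V. 2 \<le> deg E v"
  proof
    fix v assume v: "v \<in> V"
    have "\<exists>w\<in>V. w \<noteq> v"
    proof (rule ccontr)
      assume "\<not> ?thesis" then have "V \<subseteq> {v}" by blast
      then have "card V \<le> 1" using card_mono[of "{v}" V] by simp
      then show False using c by simp
    qed
    then obtain w where "w \<in> V" "w \<noteq> v" by blast
    then have "1 \<le> deg E v" using deg_pos[OF T v] by metis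
    then show "2 \<le> deg E v" using h v by fastforce
  qed
  then have "(\<Sum>v\<in>V. 2) \<le> (\<Sum>v\<in>V. deg E v)" by (intro sum_mono) simp
  then have "2 * card V \<le> 2 * card E" using handshake[OF T] by simp
  moreover have "card E = card V - 1" using T unfolding is_tree_def by blast
  ultimately show False using c by simp
qed



lemma deg1_only:
  assumes T: "is_tree V E" and d: "deg E v = 1" and a: "{v,a} \<in> E" and b: "{v,b} \<in> E"
  shows "b = a"
proof -
  have "card {e\<in>E. v \<in> e} = 1" using d unfolding deg_def .
  then have "\<exists>e. {e\<in>E. v \<in> e} = {e}" using card_1_singleton_iff[of "{e\<in>E. v \<in> e}"] by simp
  then obtain e where e: "{e\<in>E. v \<in> e} = {e}" by blast
  have "{v,a} \<in> {e\<in>E. v \<in> e}" "{v,b} \<in> {e\<in>E. v \<in> e}" using a b by simp_all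
  then have "{v,a} = e" "{v,b} = e" using e by simp_all
  then have "{v,a} = {v,b}" by simp
  moreover have "v \<noteq> a" "v \<noteq> b" using tree_edge[OF T a] tree_edge[OF T b] by simp_all
  ultimately show ?thesis by (metis doubleton_eq_iff)
qed

lemma card3:
  assumes "a \<noteq> b" "a \<noteq> c" "b \<noteq> c"
  shows "card {e\<in>{a,b,c}. v \<in> e} = (if v \<in> a then 1 else 0) + (if v \<in> b then 1 else 0) + (if v \<in> c then (1::nat) else 0)"
proof -
  have "card {e\<in>{a,b,c}. v \<in> e} = (\<Sum>e\<in>{a,b,c}. if v \<in> e then 1 else 0)"
    using sum.inter_filter[of "{a,b,c}" "\<lambda>_. 1::nat" "\<lambda>e. v \<in> e"] by simp
  also have "\<dots> = (if v \<in> a then 1 else 0) + (if v \<in> b then 1 else 0) + (if v \<in> c then (1::nat) else 0)"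
    using assms by simp
  finally show ?thesis .
qed

lemma sum3:
  assumes "a \<noteq> b" "a \<noteq> c" "b \<noteq> c"
  shows "(\<Sum>e\<in>{a,b,c}. g e) = g a + g b + (g c :: nat)"
  using assms by simp

lemma improve:
  assumes T: "is_tree V E" and ip: "internal_path E p" and len: "3 \<le> length p"
  shows "\<exists>E'. is_tree V E' \<and> (\<forall>v. deg E' v = deg E v) \<and> M2 E < M2 E'"
proof -
  have fV: "finite V" using T unfolding is_tree_def by blast
  have fE: "finite E" using tree_finE[OF T] .
  have pw: "is_walk E p" "distinct p" "2 \<le> length p" using ip unfolding internal_path_def is_path_def by simp_all
  have pne: "p \<noteq> []" using len by (cases p) auto
  define r where "r = length p - 1"
  have r2: "2 \<le> r" "Suc r = length p" "r < length p" "0 < r" "r - 1 < length p" "Suc (r - 1) = r" "0 < r - 1" "r - 1 < r"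
    using len unfolding r_def by linarith+
  have pd: "\<And>i j. i < length p \<Longrightarrow> j < length p \<Longrightarrow> i \<noteq> j \<Longrightarrow> p!i \<noteq> p!j" using dnth[OF pw(2)] by blast
  have da: "3 \<le> deg E (p!0)" using ip pne unfolding internal_path_def branching_def by (simp add: hd_conv_nth)
  have db: "3 \<le> deg E (p!r)" using ip pne unfolding internal_path_def branching_def r_def by (simp add: last_conv_nth)
  have dint: "\<And>j. 0 < j \<Longrightarrow> j < r \<Longrightarrow> deg E (p!j) = 2"
    using ip r2 unfolding internal_path_def internal_deg2_def by simp
  have pV: "\<And>j. j < length p \<Longrightarrow> p!j \<in> V" using walk_in_V[OF T pw(1) pw(3)] .
  have pe: "\<And>j. Suc j < length p \<Longrightarrow> {p!j, p!Suc j} \<in> E" using walk_edge[OF pw(1)] .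
  have nbrI: "y = p!(j-1) \<or> y = p!Suc j" if j: "0 < j" "j < r" and ey: "{p!j, y} \<in> E" for j y
  proof -
    have ea: "{p!j, p!(j-1)} \<in> E" using pe[of "j-1"] j r2 by (simp add: insert_commute)
    have eb: "{p!j, p!Suc j} \<in> E" using pe[of j] j r2 pne by simp
    have ab: "p!(j-1) \<noteq> p!Suc j" using pd[of "j-1" "Suc j"] j r2 pne by simp
    show ?thesis using deg2_nbr[OF T dint[OF j] ea eb ab ey] .
  qed
  have cV: "2 \<le> card V"
  proof -
    have "{p!0, p!1} \<subseteq> V" using pV[of 0] pV[of 1] r2 pne by simp
    then have "card {p!0, p!1} \<le> card V" using card_mono[OF fV] by blast
    moreover have "p!0 \<noteq> p!1" using pd[of 0 1] r2 pne by simp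
    ultimately show ?thesis by simp
  qed
  obtain l where lV: "l \<in> V" and dl: "deg E l = 1" using leaf_exists[OF T cV] by blast
  have lP: "p!j \<noteq> l" if "j < length p" for j
  proof
    assume h: "p!j = l"
    show False
    proof (cases "j = 0 \<or> j = r")
      case True then show False using da db h dl by (metis numeral_le_one_iff semiring_norm(70))
    next
      case False then show False using dint[of j] that r2 h dl by simp
    qed
  qed
  have "card {e\<in>E. l \<in> e} = 1" using dl unfolding deg_def .
  then have "\<exists>e0. {e\<in>E. l \<in> e} = {e0}" using card_1_singleton_iff[of "{e\<in>E. l \<in> e}"] by simp
  then obtain e0 where e0: "{e\<in>E. l \<in> e} = {e0}" by blast
  then have e0E: "e0 \<in> E" "l \<in> e0" by (metis (no_types, lifting) mem_Collect_eq singletonI)+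
  have "card e0 = 2" using T e0E(1) unfolding is_tree_def by blast
  then have "\<exists>x. x \<noteq> l \<and> e0 = {l,x}" by (rule card2_obtain[OF _ e0E(2)])
  then obtain x where xl0: "x \<noteq> l" "e0 = {l,x}" by blast
  have lx: "{l,x} \<in> E" using e0E xl0 by simp
  have xl: "{x,l} \<in> E" using lx by (simp add: insert_commute)
  have xV: "x \<in> V" using tree_edge[OF T lx] by simp
  have xI: "p!j \<noteq> x" if "0 < j" "j < r" for j
  proof
    assume h: "p!j = x"
    then have "l = p!(j-1) \<or> l = p!Suc j" using nbrI[OF that] xl by simp
    moreover have "j - 1 < length p" "Suc j < length p" using that r2 by linarith+
    ultimately show False using lP by metis
  qed
  have dx: "2 \<le> deg E x"
  proof (rule ccontr)
    assume "\<not> 2 \<le> deg E x"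
    moreover have "1 \<le> deg E x" using deg_pos[OF T xV lV xl0(1)] .
    ultimately have dx1: "deg E x = 1" by simp
    have cl: "\<forall>a b. {a,b} \<in> E \<longrightarrow> a \<in> {x,l} \<longrightarrow> b \<in> {x,l}"
    proof (intro allI impI)
      fix a b assume ab: "{a,b} \<in> E" "a \<in> {x,l}"
      have "a = x \<or> a = l" using ab(2) by simp
      then show "b \<in> {x,l}"
      proof
        assume "a = x" then have "b = l" using deg1_only[OF T dx1 xl, of b] ab(1) by simp
        then show ?thesis by simp
      next
        assume "a = l" then have "b = x" using deg1_only[OF T dl lx, of b] ab(1) by simp
        then show ?thesis by simp
      qed
    qed
    have "p!0 \<in> {x,l}" using rch_closed[OF tree_rch[OF T lV pV[of 0]] _ cl] r2 pne by simp
    moreover have "p!0 \<noteq> l" using lP[of 0] r2 pne by simp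
    ultimately have "p!0 = x" by simp
    then show False using da dx1 by simp
  qed
  define u0 where "u0 = p!0"
  define u1 where "u1 = p!1"
  define um where "um = p!(r-1)"
  define ur where "ur = p!r"
  have n01: "u0 \<noteq> u1" and n0m: "u0 \<noteq> um" and n0r: "u0 \<noteq> ur" and n1r: "u1 \<noteq> ur" and nmr: "um \<noteq> ur"
    unfolding u0_def u1_def um_def ur_def using pd[of 0 1] pd[of 0 "r-1"] pd[of 0 r] pd[of 1 r] pd[of "r-1" r] r2 pne by simp_all
  have nl: "l \<noteq> u0" "l \<noteq> u1" "l \<noteq> um" "l \<noteq> ur" "l \<noteq> x"
    unfolding u0_def u1_def um_def ur_def
    using lP[of 0] lP[of 1] lP[of "r-1"] lP[of r] xl0(1) r2 pne by (simp_all del: length_greater_0_conv)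
  have nx: "x \<noteq> u1" "x \<noteq> um" unfolding u1_def um_def using xI[of 1] xI[of "r-1"] r2 pne by simp_all
  have e01: "{u0,u1} \<in> E" unfolding u0_def u1_def using pe[of 0] r2 pne by simp
  have emr: "{um,ur} \<in> E" unfolding um_def ur_def using pe[of "r-1"] r2 pne by simp
  have n0rE: "{u0,ur} \<notin> E"
  proof
    assume "{u0,ur} \<in> E"
    then have "{last p, hd p} \<in> E" unfolding u0_def ur_def r_def using pne
      by (simp add: hd_conv_nth last_conv_nth insert_commute)
    then show False using tree_acyclic[OF T pw(1) pw(2) len] by simp
  qed
  have x1E: "{x,u1} \<in> {{u0,u1},{um,ur}}" if h: "{x,u1} \<in> E"
  proof -
    have "x = p!0 \<or> x = p!Suc 1" using nbrI[of 1 x] h r2 unfolding u1_def by (simp add: insert_commute)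
    then show ?thesis
    proof
      assume "x = p!0" then show ?thesis unfolding u0_def by simp
    next
      assume x2: "x = p!Suc 1"
      have "r = 2"
      proof (rule ccontr)
        assume "r \<noteq> 2" then have "2 < r" using r2 by simp
        then show False using xI[of 2] x2 by (simp add: numeral_2_eq_2)
      qed
      then show ?thesis using x2 unfolding um_def ur_def u1_def by (simp add: insert_commute numeral_2_eq_2)
    qed
  qed
  have mlE: "{um,l} \<notin> E"
  proof
    assume "{um,l} \<in> E"
    then have "l = p!(r-1-1) \<or> l = p!Suc (r-1)" using nbrI[of "r-1" l] r2 unfolding um_def by simp
    moreover have "r-1-1 < length p" "Suc (r-1) < length p \<or> Suc (r-1) = r" using r2 by linarith+
    ultimately show False using lP r2 by metis
  qed
  define R where "R = {{u0,u1},{um,ur},{x,l}}"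
  define A where "A = {{u0,ur},{x,u1},{um,l}}"
  define E' where "E' = (E - R) \<union> A"
  have Rd: "{u0,u1} \<noteq> {um,ur}" "{u0,u1} \<noteq> {x,l}" "{um,ur} \<noteq> {x,l}"
    using n0m n0r nl by (metis doubleton_eq_iff)+
  have Ad: "{u0,ur} \<noteq> {x,u1}" "{u0,ur} \<noteq> {um,l}" "{x,u1} \<noteq> {um,l}"
    using n01 n1r nl by (metis doubleton_eq_iff)+
  have RE: "R \<subseteq> E" unfolding R_def using e01 emr xl by simp
  have fR: "finite R" "finite A" unfolding R_def A_def by simp_all
  have AE: "A \<inter> (E - R) = {}"
  proof -
    have "{x,u1} \<notin> E - R"
    proof
      assume h: "{x,u1} \<in> E - R"
      then have "{x,u1} \<in> {{u0,u1},{um,ur}}" using x1E by simp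
      then have "{x,u1} \<in> R" unfolding R_def by blast
      then show False using h by simp
    qed
    moreover have "{u0,ur} \<notin> E - R" "{um,l} \<notin> E - R" using n0rE mlE by simp_all
    ultimately show ?thesis unfolding A_def by simp
  qed
  have cR: "card R = 3" unfolding R_def using Rd by simp
  have cA: "card A = 3" unfolding A_def using Ad by simp
  have cnt: "card {e\<in>R. v \<in> e} = card {e\<in>A. v \<in> e}" for v
  proof -
    have "card {e\<in>R. v \<in> e} = (if v \<in> {u0,u1} then 1 else 0) + (if v \<in> {um,ur} then 1 else 0) + (if v \<in> {x,l} then 1 else 0)"
      unfolding R_def by (rule card3[OF Rd])
    moreover have "card {e\<in>A. v \<in> e} = (if v \<in> {u0,ur} then 1 else 0) + (if v \<in> {x,u1} then 1 else 0) + (if v \<in> {um,l} then 1 else 0)"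
      unfolding A_def by (rule card3[OF Ad])
    ultimately show ?thesis using n01 n0m n0r n1r nmr nl nx by auto
  qed
  have degE': "deg E' v = deg E v" for v
  proof -
    have "{e\<in>E'. v \<in> e} = {e\<in>E-R. v \<in> e} \<union> {e\<in>A. v \<in> e}" unfolding E'_def by auto
    moreover have "{e\<in>E-R. v \<in> e} \<inter> {e\<in>A. v \<in> e} = {}" using AE by auto
    ultimately have 1: "deg E' v = card {e\<in>E-R. v \<in> e} + card {e\<in>A. v \<in> e}"
      unfolding deg_def using fE fR by (simp add: card_Un_disjoint)
    have "{e\<in>E. v \<in> e} = {e\<in>E-R. v \<in> e} \<union> {e\<in>R. v \<in> e}" using RE by auto
    moreover have "{e\<in>E-R. v \<in> e} \<inter> {e\<in>R. v \<in> e} = {}" by auto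
    ultimately have 2: "deg E v = card {e\<in>E-R. v \<in> e} + card {e\<in>R. v \<in> e}"
      unfolding deg_def using fE fR by (simp add: card_Un_disjoint)
    show ?thesis using 1 2 cnt by simp
  qed
  have uV: "u0 \<in> V" "u1 \<in> V" "um \<in> V" "ur \<in> V" unfolding u0_def u1_def um_def ur_def
    using pV[of 0] pV[of 1] pV[of "r-1"] pV[of r] r2 pne by simp_all
  have AsubE': "A \<subseteq> E'" unfolding E'_def by blast
  have c0: "rch E' u0 ur" using AsubE' unfolding A_def by (intro rch_edge) simp
  have c1: "rch E' x u1" "rch E' um l" using AsubE' unfolding A_def by (intro rch_edge; simp)+
  have inE': "{a,b} \<in> E'" if "{a,b} \<in> E" "{a,b} \<notin> R" for a b using that unfolding E'_def by simp
  have chain: "rch E' u1 (p!j)" if "1 \<le> j" "j \<le> r - 1" for j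
    using that
  proof (induction j)
    case 0 then show ?case by simp
  next
    case (Suc j)
    show ?case
    proof (cases "j = 0")
      case True then show ?thesis unfolding u1_def by (simp add: rch_refl)
    next
      case False
      have jj: "Suc j < length p" "j < length p" "Suc j \<noteq> 0" "Suc j \<noteq> 1" "j \<noteq> r - 1" "j \<noteq> r" "r < length p" "r - 1 < length p" "0 < length p" "1 < length p"
        using Suc.prems False r2 by linarith+
      have ed: "{p!j, p!Suc j} \<in> E" using pe jj by simp
      have nR: "{p!j, p!Suc j} \<notin> R"
      proof
        assume "{p!j, p!Suc j} \<in> R"
        then have "{p!j, p!Suc j} = {u0,u1} \<or> {p!j, p!Suc j} = {um,ur} \<or> {p!j, p!Suc j} = {x,l}" unfolding R_def by simp
        moreover have "p!Suc j \<noteq> u0" "p!Suc j \<noteq> u1" "p!j \<noteq> um" "p!j \<noteq> ur" "p!j \<noteq> l" "p!Suc j \<noteq> l"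
          unfolding u0_def u1_def um_def ur_def using pd[of "Suc j" 0] pd[of "Suc j" 1] pd[of j "r-1"] pd[of j r] lP[of j] lP[of "Suc j"] jj
          by simp_all
        ultimately show False by (metis doubleton_eq_iff)
      qed
      have "rch E' (p!j) (p!Suc j)" using inE'[OF ed nR] by (rule rch_edge)
      then show ?thesis using Suc False rch_trans by (metis Suc_leD Suc_leI not_gr0 One_nat_def)
    qed
  qed
  have "rch E' u1 um" using chain[of "r-1"] r2 unfolding um_def by simp
  then have xlE': "rch E' x l" using c1 rch_trans by metis
  have lift: "rch E' a b" if ab: "{a,b} \<in> E" and a: "a \<notin> set p" for a b
  proof (cases "{a,b} \<in> R")
    case False then show ?thesis using inE'[OF ab] rch_edge by metis
  next
    case True
    have "u0 \<in> set p" "u1 \<in> set p" "um \<in> set p" "ur \<in> set p" unfolding u0_def u1_def um_def ur_def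
      using nth_mem[of 0 p] nth_mem[of 1 p] nth_mem[of "r-1" p] nth_mem[of r p] r2 by (simp_all del: length_greater_0_conv)
    then have "a \<noteq> u0" "a \<noteq> u1" "a \<noteq> um" "a \<noteq> ur" using a by auto
    then have "{a,b} = {x,l}" using True unfolding R_def by (auto simp: doubleton_eq_iff)
    then have "(a = x \<and> b = l) \<or> (a = l \<and> b = x)" by (auto simp: doubleton_eq_iff)
    then show ?thesis using xlE' rch_sym by metis
  qed
  have wl: "is_walk E w \<Longrightarrow> hd w \<notin> set p \<Longrightarrow> last w \<in> set p \<Longrightarrow> rch E' (hd w) u0" for w
  proof (induction w)
    case Nil then show ?case by simp
  next
    case (Cons a w)
    show ?case
    proof (cases w)
      case Nil then show ?thesis using Cons.prems by simp
    next
      case (Cons b w')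
      have ab: "{a,b} \<in> E" "is_walk E (b # w')" using Cons.prems(1) Cons walk_Cons2 by metis+
      have a: "a \<notin> set p" using Cons.prems(2) by simp
      have rab: "rch E' a b" using lift[OF ab(1) a] .
      show ?thesis
      proof (cases "b \<in> set p")
        case True
        then obtain j where j: "j < length p" "p!j = b" by (auto simp: in_set_conv_nth)
        have "j = 0 \<or> j = r"
        proof (rule ccontr)
          assume "\<not> (j = 0 \<or> j = r)"
          then have jr: "0 < j" "j < r" using j r2 by auto
          have "{p!j, a} \<in> E" using ab(1) j by (simp add: insert_commute)
          then have "a = p!(j-1) \<or> a = p!Suc j" using nbrI[OF jr] by simp
          moreover have "j - 1 < length p" "Suc j < length p" using jr r2 by linarith+
          ultimately show False using a by (metis nth_mem)
        qed
        then have "rch E' b u0" using j c0 rch_sym rch_refl unfolding u0_def ur_def by metis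
        then show ?thesis using rab rch_trans by (metis list.sel(1))
      next
        case False
        have "last (b # w') \<in> set p" using Cons.prems(3) Cons by simp
        then have "rch E' b u0" using Cons.IH ab(2) False Cons by simp
        then show ?thesis using rab rch_trans by (metis list.sel(1))
      qed
    qed
  qed
  have toU: "rch E' v u0" if v: "v \<in> V" "v \<notin> set p" for v
  proof -
    obtain w where w: "is_walk E w" "hd w = v" "last w = u0" using tree_rch[OF T v(1) uV(1)] rch_walk by metis
    have "u0 \<in> set p" unfolding u0_def using pne by simp
    then show ?thesis using wl[OF w(1)] w v by simp
  qed
  have xu0: "rch E' x u0"
  proof (cases "x \<in> set p")
    case False then show ?thesis using toU xV by simp
  next
    case True
    then obtain j where j: "j < length p" "p!j = x" by (auto simp: in_set_conv_nth)
    have "j = 0 \<or> j = r" using xI[of j] j r2 by (metis Suc_lessI less_antisym not_gr0)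
    then show ?thesis using j c0 rch_sym rch_refl unfolding u0_def ur_def by metis
  qed
  have allU: "rch E' v u0" if v: "v \<in> V" for v
  proof (cases "v \<in> set p")
    case False then show ?thesis using toU v by simp
  next
    case True
    then obtain j where j: "j < length p" "p!j = v" by (auto simp: in_set_conv_nth)
    show ?thesis
    proof (cases "0 < j \<and> j < r")
      case True
      have "rch E' v u1" using chain[of j] True j rch_sym by (metis One_nat_def Suc_leI le_diff_conv2 Suc_le_eq r2(4) add.commute plus_1_eq_Suc)
      then show ?thesis using c1(1) xu0 rch_sym rch_trans by metis
    next
      case False
      then have "j = 0 \<or> j = r" using j r2 by auto
      then show ?thesis using j c0 rch_sym rch_refl unfolding u0_def ur_def by metis
    qed
  qed
  have E'V: "\<forall>e\<in>E'. e \<subseteq> V \<and> card e = 2"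
  proof
    fix e assume "e \<in> E'"
    then have "e \<in> E \<or> e \<in> A" unfolding E'_def by blast
    then show "e \<subseteq> V \<and> card e = 2"
    proof
      assume "e \<in> E" then show ?thesis using T unfolding is_tree_def by blast
    next
      assume "e \<in> A"
      then have "e = {u0,ur} \<or> e = {x,u1} \<or> e = {um,l}" unfolding A_def by simp
      then show ?thesis using uV xV lV n0r nx nl by auto
    qed
  qed
  have cE': "card E' = card E"
  proof -
    have "card E' = card (E - R) + card A" unfolding E'_def using fE fR AE
      by (subst card_Un_disjoint) (auto)
    moreover have "card (E - R) = card E - card R" using card_Diff_subset[OF fR(1) RE] .
    moreover have "card R \<le> card E" using card_mono[OF fE RE] .
    ultimately show ?thesis using cR cA by simp
  qed
  have treeE': "is_tree V E'" unfolding is_tree_def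
  proof (intro conjI)
    show "finite V" "V \<noteq> {}" using T unfolding is_tree_def by simp_all
    show "\<forall>e\<in>E'. e \<subseteq> V \<and> card e = 2" using E'V .
    show "\<forall>u\<in>V. \<forall>v\<in>V. \<exists>p. is_walk E' p \<and> hd p = u \<and> last p = v"
    proof (intro ballI)
      fix u v assume "u \<in> V" "v \<in> V"
      then have "rch E' u v" using allU rch_sym rch_trans by metis
      then show "\<exists>p. is_walk E' p \<and> hd p = u \<and> last p = v" by (rule rch_walk)
    qed
    show "card E' = card V - 1" using cE' T unfolding is_tree_def by simp
  qed
  define w where "w e = (\<Prod>v\<in>e. deg E v)" for e
  have M2E': "M2 E' = sum w E'" unfolding M2_def w_def using degE' by simp
  have M2E: "M2 E = sum w E" unfolding M2_def w_def by simp
  have s1: "sum w E' = sum w (E - R) + sum w A" unfolding E'_def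
    using fE fR AE by (subst sum.union_disjoint) auto
  have s2: "sum w E = sum w (E - R) + sum w R"
  proof -
    have "E = (E - R) \<union> R" using RE by auto
    then have "sum w E = sum w ((E - R) \<union> R)" by simp
    also have "\<dots> = sum w (E - R) + sum w R" using fE fR by (subst sum.union_disjoint) auto
    finally show ?thesis .
  qed
  have wd: "w {s,t} = deg E s * deg E t" if "s \<noteq> t" for s t unfolding w_def using that by simp
  have d1: "deg E u1 = 2" "deg E um = 2" unfolding u1_def um_def using dint[of 1] dint[of "r-1"] r2 by simp_all
  have sR: "sum w R = deg E u0 * 2 + 2 * deg E ur + deg E x * 1"
    unfolding R_def using sum3[OF Rd, of w] wd n01 nmr xl0(1) d1 dl by simp
  have sA: "sum w A = deg E u0 * deg E ur + deg E x * 2 + 2 * 1"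
    unfolding A_def using sum3[OF Ad, of w] wd n0r nx(1) nl(3) d1 dl by (simp add: eq_commute[of l um])
  have ineq: "deg E u0 * 2 + 2 * deg E ur + deg E x * 1 < deg E u0 * deg E ur + deg E x * 2 + 2 * 1"
  proof -
    obtain a' where a': "deg E u0 = a' + 3" using da unfolding u0_def by (metis add.commute le_Suc_ex)
    obtain b' where b': "deg E ur = b' + 3" using db unfolding ur_def by (metis add.commute le_Suc_ex)
    show ?thesis using a' b' dx by (simp add: algebra_simps)
  qed
  have "M2 E < M2 E'" using M2E M2E' s1 s2 sR sA ineq by simp
  then show ?thesis using treeE' degE' by blast
qed



theorem lemma3:
  fixes V :: "'a set" and E :: "'a set set" and n k :: nat
  assumes "3 \<le> k" and "k \<le> n - 1"
    and "(V, E) \<in> CT n k"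
    and "\<forall>(V', E') \<in> (CT n k :: (nat set \<times> nat set set) set). M2 E' \<le> M2 E"
  shows "\<forall>p. internal_path E p \<longrightarrow> \<not> path_length p > 1"
proof (intro allI impI notI)
  fix p assume ip: "internal_path E p" and pl: "path_length p > 1"
  have len: "3 \<le> length p" using pl unfolding path_length_def by simp
  have ch: "chemical_tree V E" and cV: "card V = n" and ns: "num_segments E = k"
    using assms(3) unfolding CT_def by simp_all
  have T: "is_tree V E" and d4: "\<forall>v\<in>V. deg E v \<le> 4" using ch unfolding chemical_tree_def by simp_all
  obtain E' where T': "is_tree V E'" and dg: "\<forall>v. deg E' v = deg E v" and lt: "M2 E < M2 E'"
    using improve[OF T ip len] by blast
  have ns': "num_segments E' = k"
  proof -
    have "2 * num_segments E' = (\<Sum>v\<in>{v\<in>V. deg E' v \<noteq> 2}. deg E' v)" by (rule seg_formula[OF T'])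
    also have "\<dots> = (\<Sum>v\<in>{v\<in>V. deg E v \<noteq> 2}. deg E v)" using dg by simp
    also have "\<dots> = 2 * num_segments E" by (rule seg_formula[OF T, symmetric])
    finally show ?thesis using ns by simp
  qed
  have fV: "finite V" using T unfolding is_tree_def by blast
  obtain f :: "'a \<Rightarrow> nat" and m where "f ` V = {i. i < m}" and inj: "inj_on f V"
    using finite_imp_inj_to_nat_seg[OF fV] by blast
  define E2 where "E2 = (`) f ` E'"
  have t1: "is_tree (f ` V) E2" unfolding E2_def by (rule transfer_iso(2)[OF T' inj])
  have t2: "card (f ` V) = n" using transfer_iso(3)[OF T' inj] cV by simp
  have t3: "num_segments E2 = k" unfolding E2_def using transfer_iso(4)[OF T' inj] ns' by simp
  have t4: "M2 E2 = M2 E'" unfolding E2_def by (rule transfer_iso(5)[OF T' inj])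
  have t5: "\<forall>v'\<in>f ` V. deg E2 v' \<le> 4"
  proof
    fix v' assume "v' \<in> f ` V"
    then obtain v where v: "v \<in> V" "v' = f v" by blast
    have "deg E2 v' = deg E' v" unfolding E2_def v(2) by (rule transfer_iso(1)[OF T' inj v(1)])
    then show "deg E2 v' \<le> 4" using dg d4 v(1) by simp
  qed
  have "(f ` V, E2) \<in> (CT n k :: (nat set \<times> nat set set) set)"
    unfolding CT_def chemical_tree_def using t1 t2 t3 t5 by simp
  then have "M2 E2 \<le> M2 E" using assms(4) by fastforce
  then show False using t4 lt by simp
qed

end
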